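(* Let $D\in\{D_1,D_2,\dots,D_8\}$. For every positive integer $v$ with $v\equiv 7\pmod{14}$, there exists a $D$-decomposition of $K^*_v$.
   Context: $K^*_v$ denotes the complete symmetric digraph of order $v$: it contains both arcs $(x,y)$ and $(y,x)$ for every pair of distinct vertices $x,y$. A $D$-decomposition of a digraph $K$ is a set of subdigraphs of $K$, each isomorphic to $D$, such that every arc of $K$ lies in exactly one of them. For distinct vertices $v_0,\dots,v_6$, the digraphs $D_i[v_0,v_1,\dots,v_6]$ ($i\in[1,8]$) all have vertex set $\{v_0,\dots,v_6\}$ and the following arc sets: $D_1$: $(v_1,v_0),(v_1,v_2),(v_2,v_3),(v_3,v_4),(v_4,v_5),(v_5,v_6),(v_6,v_0)$; $D_2$: $(v_1,v_0),(v_2,v_1),(v_2,v_3),(v_3,v_4),(v_4,v_5),(v_5,v_6),(v_6,v_0)$; $D_3$: $(v_1,v_0),(v_1,v_2),(v_3,v_2),(v_3,v_4),(v_4,v_5),(v_5,v_6),(v_6,v_0)$; $D_4$: $(v_1,v_0),(v_1,v_2),(v_2,v_3),(v_4,v_3),(v_4,v_5),(v_5,v_6),(v_6,v_0)$; $D_5$: $(v_1,v_0),(v_2,v_1),(v_3,v_2),(v_3,v_4),(v_4,v_5),(v_5,v_6),(v_6,v_0)$; $D_6$: $(v_1,v_0),(v_2,v_1),(v_2,v_3),(v_3,v_4),(v_5,v_4),(v_5,v_6),(v_6,v_0)$; $D_7$: $(v_1,v_0),(v_1,v_2),(v_3,v_2),(v_3,v_4),(v_4,v_5),(v_6,v_5),(v_6,v_0)$;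 $D_8$: $(v_1,v_0),(v_2,v_1),(v_2,v_3),(v_4,v_3),(v_4,v_5),(v_5,v_6),(v_6,v_0)$. $D_i$ also denotes the isomorphism type of $D_i[v_0,\dots,v_6]$. *)

theory Defs
  imports Main
begin

type_synonym 'a digraph = "'a set \<times> ('a \<times> 'a) set"

definition Kstar :: "nat \<Rightarrow> nat digraph" where
  "Kstar v = ({0..<v}, {(x, y). x < v \<and> y < v \<and> x \<noteq> y})"

text \<open>The arc sets of D_1,...,D_8 on the abstract vertices 0..6 (index k stands for v_k).\<close>

definition D_arcs :: "nat \<Rightarrow> (nat \<times> nat) set" where
  "D_arcs i =
    (if i = 1 then {(1,0),(1,2),(2,3),(3,4),(4,5),(5,6),(6,0)}
     else if i = 2 then {(1,0),(2,1),(2,3),(3,4),(4,5),(5,6),(6,0)}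
     else if i = 3 then {(1,0),(1,2),(3,2),(3,4),(4,5),(5,6),(6,0)}
     else if i = 4 then {(1,0),(1,2),(2,3),(4,3),(4,5),(5,6),(6,0)}
     else if i = 5 then {(1,0),(2,1),(3,2),(3,4),(4,5),(5,6),(6,0)}
     else if i = 6 then {(1,0),(2,1),(2,3),(3,4),(5,4),(5,6),(6,0)}
     else if i = 7 then {(1,0),(1,2),(3,2),(3,4),(4,5),(6,5),(6,0)}
     else if i = 8 then {(1,0),(2,1),(2,3),(4,3),(4,5),(5,6),(6,0)}
     else {})"

definition D_inst :: "nat \<Rightarrow> (nat \<Rightarrow> 'a) \<Rightarrow> 'a digraph" where
  "D_inst i f = (f ` {0..6}, (\<lambda>(a, b). (f a, f b)) ` D_arcs i)"

definition subdigraph :: "'a digraph \<Rightarrow> 'a digraph \<Rightarrow> bool" where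
  "subdigraph H G \<longleftrightarrow> fst H \<subseteq> fst G \<and> snd H \<subseteq> snd G \<and> snd H \<subseteq> fst H \<times> fst H"

definition iso_D :: "nat \<Rightarrow> 'a digraph \<Rightarrow> bool" where
  "iso_D i H \<longleftrightarrow> (\<exists>f. inj_on f {0..6} \<and> H = D_inst i f)"

definition D_decomposition :: "nat \<Rightarrow> 'a digraph \<Rightarrow> 'a digraph set \<Rightarrow> bool" where
  "D_decomposition i G \<D> \<longleftrightarrow>
     (\<forall>H\<in>\<D>. subdigraph H G \<and> iso_D i H) \<and>
     (\<forall>e\<in>snd G. \<exists>!H. H \<in> \<D> \<and> e \<in> snd H)"

end

theory Submission
  imports Defs
begin

definition enc :: "int \<Rightarrow> int \<Rightarrow> nat" where "enc y x = nat (7*y + x)"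

lemma enc_eq:
  assumes "0 \<le> x" "x < 7" "0 \<le> y"
  shows "(enc y x = u) \<longleftrightarrow> (y = int u div 7 \<and> x = int u mod 7)"
proof
  assume "enc y x = u"
  hence "int u = 7*y + x" using assms unfolding enc_def by simp
  thus "y = int u div 7 \<and> x = int u mod 7" using assms by simp
next
  assume "y = int u div 7 \<and> x = int u mod 7"
  thus "enc y x = u" unfolding enc_def by simp
qed

lemma enc_dec: "0 \<le> x \<Longrightarrow> x < 7 \<Longrightarrow> 0 \<le> y \<Longrightarrow> int (enc y x) div 7 = y \<and> int (enc y x) mod 7 = x"
  using enc_eq[of x y "enc y x"] by simp

lemma enc_lt: "0 \<le> x \<Longrightarrow> x < 7 \<Longrightarrow> 0 \<le> y \<Longrightarrow> y < m \<Longrightarrow> int v = 7*m \<Longrightarrow> enc y x < v"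
  unfolding enc_def by simp

lemma coprime_d: fixes m d :: int assumes "odd m" "\<bar>d\<bar> \<in> {1,2}" shows "coprime m d"
proof -
  have "d = 1 \<or> d = -1 \<or> d = 2 \<or> d = -2" using assms(2) by auto
  thus ?thesis using assms(1) by auto
qed

lemma cancel_d: fixes m c d :: int assumes "odd m" "\<bar>d\<bar> \<in> {1,2}" "m dvd c*d" shows "m dvd c"
  using coprime_d[OF assms(1,2)] assms(3) coprime_dvd_mult_left_iff by blast

lemma small_dvd: fixes a b m :: int
  assumes "0 \<le> a" "a < m" "0 \<le> b" "b < m" "m dvd a - b" shows "a = b"
proof -
  obtain k where k: "a - b = m*k" using assms(5) by blast
  have "k = 0"
  proof (rule ccontr)
    assume "k \<noteq> 0"
    hence "\<bar>m*k\<bar> \<ge> m" using assms by (simp add: abs_mult)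
    thus False using k assms by linarith
  qed
  thus ?thesis using k by simp
qed

lemma solve_d: fixes m d \<beta> :: int assumes "odd m" "\<bar>d\<bar> \<in> {1,2}" "m > 0"
  obtains b where "0 \<le> b" "b < m" "m dvd b*d - \<beta>"
proof -
  have "gcd d m = 1" using coprime_d[OF assms(1,2)] by (simp add: coprime_iff_gcd_eq_1 gcd.commute)
  then obtain s t where st: "s*d + t*m = 1" using bezout_int[of d m] by auto
  define b where "b = (\<beta>*s) mod m"
  have "b*d - \<beta> = m * (- \<beta>*t - ((\<beta>*s) div m)*d)"
  proof -
    have "b = \<beta>*s - m*((\<beta>*s) div m)" unfolding b_def by (simp add: minus_div_mult_eq_mod [symmetric])
    hence "b*d - \<beta> = (\<beta>*s - m*((\<beta>*s) div m))*d - \<beta>" by simp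
    also have "\<dots> = \<beta>*(s*d) - m*((\<beta>*s) div m)*d - \<beta>" by (simp add: algebra_simps)
    also have "\<dots> = \<beta>*(1 - t*m) - m*((\<beta>*s) div m)*d - \<beta>" proof -
      have "s*d = 1 - t*m" using st by linarith
      thus ?thesis by simp
    qed
    finally show ?thesis by (simp add: algebra_simps)
  qed
  hence "m dvd b*d - \<beta>" by simp
  moreover have "0 \<le> b" "b < m" unfolding b_def using assms(3) by auto
  ultimately show ?thesis using that by blast
qed

lemma memD: "e \<in> snd (D_inst i f) \<longleftrightarrow> (\<exists>(p,q)\<in>D_arcs i. e = (f p, f q))"
  by (auto simp: D_inst_def)

lemma mod_dvd: "(a::int) mod n = b mod n \<longleftrightarrow> n dvd a - b"
  by (simp add: mod_eq_dvd_iff)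

lemma enc_uv: "enc (int u div 7) (int u mod 7) = u"
  unfolding enc_def by simp

lemma generic:
  fixes m :: int and X Y :: "nat \<Rightarrow> int" and G :: "nat \<Rightarrow> nat \<Rightarrow> int" and v i :: nat
  assumes modd: "odd m" and mpos: "m > 0"
  and vm: "int v = 7*m"
  and Asub: "\<And>p q. (p,q)\<in>D_arcs i \<Longrightarrow> p < 7 \<and> q < 7 \<and> p \<noteq> q"
  and Xr: "\<And>k. k<7 \<Longrightarrow> 0 \<le> X k \<and> X k < 7"
  and sep: "\<And>k l. k<7 \<Longrightarrow> l<7 \<Longrightarrow> k \<noteq> l \<Longrightarrow> X k \<noteq> X l \<or> \<bar>Y k - Y l\<bar> \<in> {1,2}"
  and eta: "\<And>p q. (p,q)\<in>D_arcs i \<Longrightarrow> \<bar>Y q - Y p\<bar> \<in> {1,2}"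
  and dinj: "\<And>p q p' q'. (p,q)\<in>D_arcs i \<Longrightarrow> (p',q')\<in>D_arcs i \<Longrightarrow> (X q - X p) mod 7 = (X q' - X p') mod 7 \<Longrightarrow> p = p' \<and> q = q'"
  and dsurj: "\<And>\<alpha>. 0 \<le> \<alpha> \<Longrightarrow> \<alpha> \<le> 6 \<Longrightarrow> \<exists>p q. (p,q)\<in>D_arcs i \<and> (X q - X p) mod 7 = \<alpha>"
  and Gr: "\<And>j k. j<6 \<Longrightarrow> k<7 \<Longrightarrow> 0 \<le> G j k \<and> G j k < 7"
  and Ginj: "\<And>j k l. j<6 \<Longrightarrow> k<7 \<Longrightarrow> l<7 \<Longrightarrow> G j k = G j l \<Longrightarrow> k = l"
  and Gcov: "\<And>a c. 0 \<le> a \<Longrightarrow> a \<le> 6 \<Longrightarrow> 0 \<le> c \<Longrightarrow> c \<le> 6 \<Longrightarrow> a \<noteq> c \<Longrightarrow> \<exists>j p q. j<6 \<and> (p,q)\<in>D_arcs i \<and> G j p = a \<and> G j q = c"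
  and Guniq: "\<And>j j' p q p' q'. j<6 \<Longrightarrow> j'<6 \<Longrightarrow> (p,q)\<in>D_arcs i \<Longrightarrow> (p',q')\<in>D_arcs i \<Longrightarrow> G j p = G j' p' \<Longrightarrow> G j q = G j' q' \<Longrightarrow> j = j'"
  shows "\<exists>\<D>. D_decomposition i (Kstar v) \<D>"
proof -
  define lay where "lay y j = (\<lambda>k. enc y (G j k))" for y :: int and j :: nat
  define blk where "blk b x0 y0 = (\<lambda>k. enc ((y0 + b * Y k) mod m) ((x0 + X k) mod 7))" for b x0 y0 :: int
  define L where "L = (\<lambda>(y,j). D_inst i (lay y j)) ` ({0..<m} \<times> {..<6})"
  define B where "B = (\<lambda>(b,x0,y0). D_inst i (blk b x0 y0)) ` ({1..<m} \<times> {0..<7} \<times> {0..<m})"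
  have good: "subdigraph (D_inst i f) (Kstar v) \<and> iso_D i (D_inst i f)"
    if inj: "\<And>k l. k < 7 \<Longrightarrow> l < 7 \<Longrightarrow> f k = f l \<Longrightarrow> k = l" and lt: "\<And>k. k < 7 \<Longrightarrow> f k < v" for f :: "nat \<Rightarrow> nat"
  proof
    have io: "inj_on f {0..6}" using inj unfolding inj_on_def by auto
    show "iso_D i (D_inst i f)" unfolding iso_D_def using io by blast
    show "subdigraph (D_inst i f) (Kstar v)"
      unfolding subdigraph_def
    proof (intro conjI)
      show "fst (D_inst i f) \<subseteq> fst (Kstar v)" using lt by (auto simp: D_inst_def Kstar_def)
      show "snd (D_inst i f) \<subseteq> snd (Kstar v)"
      proof
        fix e assume "e \<in> snd (D_inst i f)"
        then obtain p q where pq: "(p,q) \<in> D_arcs i" "e = (f p, f q)" unfolding memD by auto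
        hence "p < 7" "q < 7" "p \<noteq> q" using Asub by auto
        thus "e \<in> snd (Kstar v)" using pq inj lt by (auto simp: Kstar_def)
      qed
      show "snd (D_inst i f) \<subseteq> fst (D_inst i f) \<times> fst (D_inst i f)"
      proof
        fix e assume "e \<in> snd (D_inst i f)"
        then obtain p q where pq: "(p,q) \<in> D_arcs i" "e = (f p, f q)" unfolding memD by auto
        hence "p < 7" "q < 7" using Asub by auto
        thus "e \<in> fst (D_inst i f) \<times> fst (D_inst i f)" using pq by (auto simp: D_inst_def)
      qed
    qed
  qed
  have enc_inj: "y = y' \<and> x = x'"
    if "0 \<le> x" "x < 7" "0 \<le> y" "0 \<le> x'" "x' < 7" "0 \<le> y'" "enc y x = enc y' x'" for x y x' y' :: int
    using enc_dec[of x y] enc_dec[of x' y'] that by metis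
  have goodL: "subdigraph H (Kstar v) \<and> iso_D i H" if "H \<in> L" for H
  proof -
    obtain y j where yj: "0 \<le> y" "y < m" "j < 6" "H = D_inst i (lay y j)" using \<open>H \<in> L\<close> unfolding L_def by auto
    show ?thesis unfolding yj(4)
    proof (rule good)
      fix k l :: nat assume kl: "k < 7" "l < 7" "lay y j k = lay y j l"
      have "G j k = G j l" using enc_inj[of "G j k" y "G j l" y] Gr[of j k] Gr[of j l] kl yj unfolding lay_def by simp
      thus "k = l" using Ginj yj kl by blast
    next
      fix k :: nat assume "k < 7" thus "lay y j k < v" unfolding lay_def using enc_lt[OF _ _ _ _ vm] Gr yj by auto
    qed
  qed
  have goodB: "subdigraph H (Kstar v) \<and> iso_D i H" if "H \<in> B" for H
  proof -
    obtain b x0 y0 where yj: "1 \<le> b" "b < m" "0 \<le> x0" "x0 < 7" "0 \<le> y0" "y0 < m"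
      "H = D_inst i (blk b x0 y0)" using \<open>H \<in> B\<close> unfolding B_def by auto
    show ?thesis unfolding yj(7)
    proof (rule good)
      fix k l :: nat assume kl: "k < 7" "l < 7" "blk b x0 y0 k = blk b x0 y0 l"
      have e: "(y0 + b * Y k) mod m = (y0 + b * Y l) mod m \<and> (x0 + X k) mod 7 = (x0 + X l) mod 7"
        using kl(3) unfolding blk_def using mpos by (intro enc_inj) auto
      hence "7 dvd (x0 + X k) - (x0 + X l)" unfolding mod_dvd by simp
      hence "7 dvd X k - X l" by simp
      hence xe: "X k = X l" using small_dvd[of "X k" 7 "X l"] Xr kl by auto
      show "k = l"
      proof (rule ccontr)
        assume "k \<noteq> l"
        hence d: "\<bar>Y k - Y l\<bar> \<in> {1,2}" using sep kl xe by auto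
        have "m dvd (y0 + b * Y k) - (y0 + b * Y l)" using e unfolding mod_dvd by simp
        moreover have "(y0 + b * Y k) - (y0 + b * Y l) = b * (Y k - Y l)" by (simp add: algebra_simps)
        ultimately have "m dvd b * (Y k - Y l)" by simp
        hence "m dvd b" using cancel_d[OF modd d] by blast
        thus False using small_dvd[of b m 0] yj by auto
      qed
    next
      fix k :: nat assume "k < 7" thus "blk b x0 y0 k < v" unfolding blk_def using enc_lt[OF _ _ _ _ vm] mpos by auto
    qed
  qed
  have inL: "\<exists>j p q. j<6 \<and> (p,q)\<in>D_arcs i \<and> G j p = int u mod 7 \<and> G j q = int w mod 7 \<and> H = D_inst i (lay (int u div 7) j)
      \<and> int u div 7 = int w div 7"
    if hL: "H \<in> L" and hu: "(u,w) \<in> snd H" for H u w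
  proof -
    obtain y j where yj: "0 \<le> y" "y < m" "j < 6" "H = D_inst i (lay y j)" using hL unfolding L_def by auto
    obtain p q where pq: "(p,q) \<in> D_arcs i" "u = lay y j p" "w = lay y j q" using hu unfolding yj(4) memD by auto
    have p7: "p < 7" "q < 7" using pq Asub by auto
    have "y = int u div 7 \<and> G j p = int u mod 7" using pq(2) unfolding lay_def using enc_dec[of "G j p" y] Gr[OF yj(3) p7(1)] yj by simp
    moreover have "y = int w div 7 \<and> G j q = int w mod 7" using pq(3) unfolding lay_def using enc_dec[of "G j q" y] Gr[OF yj(3) p7(2)] yj by simp
    ultimately show ?thesis using yj pq by blast
  qed
  have inB: "\<exists>b x0 y0 p q. 1 \<le> b \<and> b < m \<and> 0 \<le> x0 \<and> x0 < 7 \<and> 0 \<le> y0 \<and> y0 < m \<and> H = D_inst i (blk b x0 y0)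
     \<and> (p,q) \<in> D_arcs i \<and> int u div 7 = (y0 + b * Y p) mod m \<and> int u mod 7 = (x0 + X p) mod 7
     \<and> int w div 7 = (y0 + b * Y q) mod m \<and> int w mod 7 = (x0 + X q) mod 7"
    if hL: "H \<in> B" and hu: "(u,w) \<in> snd H" for H u w
  proof -
    obtain b x0 y0 where yj: "1 \<le> b" "b < m" "0 \<le> x0" "x0 < 7" "0 \<le> y0" "y0 < m"
      "H = D_inst i (blk b x0 y0)" using hL unfolding B_def by auto
    obtain p q where pq: "(p,q) \<in> D_arcs i" "u = blk b x0 y0 p" "w = blk b x0 y0 q" using hu unfolding yj(7) memD by auto
    have "int u div 7 = (y0 + b * Y p) mod m \<and> int u mod 7 = (x0 + X p) mod 7"
      using pq(2) unfolding blk_def using enc_dec[of "(x0 + X p) mod 7" "(y0 + b * Y p) mod m"] mpos by simp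
    moreover have "int w div 7 = (y0 + b * Y q) mod m \<and> int w mod 7 = (x0 + X q) mod 7"
      using pq(3) unfolding blk_def using enc_dec[of "(x0 + X q) mod 7" "(y0 + b * Y q) mod m"] mpos by simp
    ultimately show ?thesis using yj pq by blast
  qed
  have Bne: "int u div 7 \<noteq> int w div 7" if hB: "H \<in> B" "(u,w) \<in> snd H" for H u w
  proof
    assume eq: "int u div 7 = int w div 7"
    obtain b x0 y0 p q where r: "1 \<le> b" "b < m" "(p,q) \<in> D_arcs i" "int u div 7 = (y0 + b * Y p) mod m"
       "int w div 7 = (y0 + b * Y q) mod m" using inB[OF hB] by blast
    have d: "\<bar>Y q - Y p\<bar> \<in> {1,2}" using eta r(3) by auto
    have "(y0 + b * Y q) mod m = (y0 + b * Y p) mod m" using r(4,5) eq by simp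
    hence "m dvd (y0 + b * Y q) - (y0 + b * Y p)" unfolding mod_dvd .
    moreover have "(y0 + b * Y q) - (y0 + b * Y p) = b * (Y q - Y p)" by (simp add: algebra_simps)
    ultimately have "m dvd b * (Y q - Y p)" by simp
    hence "m dvd b" using cancel_d[OF modd d] by blast
    thus False using small_dvd[of b m 0] r by auto
  qed
  have uniq: "\<exists>!H. H \<in> L \<union> B \<and> e \<in> snd H" if he: "e \<in> snd (Kstar v)" for e
  proof -
      obtain u w where e: "e = (u,w)" "u < v" "w < v" "u \<noteq> w" using he unfolding Kstar_def by auto
      define yu where "yu = int u div 7"
      define yw where "yw = int w div 7"
      define xu where "xu = int u mod 7"
      define xw where "xw = int w mod 7"
      have ranges: "0 \<le> yu" "yu < m" "0 \<le> yw" "yw < m" "0 \<le> xu" "xu < 7" "0 \<le> xw" "xw < 7"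
        unfolding yu_def yw_def xu_def xw_def using e vm by auto
      have uu: "int u = 7*yu + xu" "int w = 7*yw + xw" unfolding yu_def yw_def xu_def xw_def by auto
      have encu: "enc yu xu = u" "enc yw xw = w" unfolding yu_def yw_def xu_def xw_def by (rule enc_uv)+
      show "\<exists>!H. H \<in> L \<union> B \<and> e \<in> snd H"
      proof (cases "yu = yw")
        case True
        hence "xu \<noteq> xw" using uu e by auto
        then obtain j p q where j: "j < 6" "(p,q) \<in> D_arcs i" "G j p = xu" "G j q = xw"
          using Gcov[of xu xw] ranges by auto
        let ?H = "D_inst i (lay yu j)"
        have "?H \<in> L" unfolding L_def using ranges j
          by (intro image_eqI[where x="(yu,j)"]) auto
        moreover have "e \<in> snd ?H"
        proof -
          have "lay yu j p = u" "lay yu j q = w" unfolding lay_def using j encu True by simp_all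
          thus ?thesis unfolding memD e using j(2) by auto
        qed
        moreover have "H = ?H" if hh: "H \<in> L \<union> B" "e \<in> snd H" for H
        proof -
          have "H \<notin> B" using Bne[of H u w] hh(2) True e(1) unfolding yu_def yw_def by blast
          hence hL: "H \<in> L" using hh(1) by blast
          obtain j' p' q' where j': "j' < 6" "(p',q')\<in>D_arcs i" "G j' p' = xu" "G j' q' = xw" "H = D_inst i (lay yu j')"
            using inL[OF hL] hh(2) unfolding e(1) xu_def xw_def yu_def by blast
          have "j' = j" using Guniq[OF j'(1) j(1) j'(2) j(2)] j j' by simp
          thus ?thesis using j' by simp
        qed
        ultimately show ?thesis by blast
      next
        case False
        define \<alpha> where "\<alpha> = (xw - xu) mod 7"
        have "0 \<le> \<alpha>" "\<alpha> \<le> 6" unfolding \<alpha>_def by auto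
        then obtain p q where pq: "(p,q) \<in> D_arcs i" "(X q - X p) mod 7 = \<alpha>" using dsurj by blast
        have d: "\<bar>Y q - Y p\<bar> \<in> {1,2}" using eta pq by auto
        obtain b where b: "0 \<le> b" "b < m" "m dvd b * (Y q - Y p) - (yw - yu)" using solve_d[OF modd d mpos] by blast
        have b1: "1 \<le> b"
        proof (rule ccontr)
          assume "\<not> 1 \<le> b" hence "b = 0" using b by auto
          hence "m dvd yu - yw" using b by simp
          hence "m dvd yw - yu" by (metis dvd_minus_iff minus_diff_eq)
          thus False using small_dvd[of yw m yu] ranges False by auto
        qed
        define x0 where "x0 = (xu - X p) mod 7"
        define y0 where "y0 = (yu - b * Y p) mod m"
        have x0r: "0 \<le> x0" "x0 < 7" unfolding x0_def by auto
        have y0r: "0 \<le> y0" "y0 < m" unfolding y0_def using mpos by auto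
        have h1y: "m dvd y0 - (yu - b * Y p)" unfolding y0_def mod_dvd[symmetric] by simp
        have h1x: "7 dvd x0 - (xu - X p)" unfolding x0_def mod_dvd[symmetric] by simp
        let ?H = "D_inst i (blk b x0 y0)"
        have "?H \<in> B" unfolding B_def using b b1 x0r y0r
          by (intro image_eqI[where x="(b,x0,y0)"]) auto
        moreover have "e \<in> snd ?H"
        proof -
          have c1: "(y0 + b * Y p) mod m = yu"
          proof -
            have E: "y0 + b * Y p - yu = y0 - (yu - b * Y p)" by simp
            have "m dvd y0 + b * Y p - yu" unfolding E using h1y by simp
            hence "(y0 + b * Y p) mod m = yu mod m" unfolding mod_dvd .
            thus ?thesis using ranges by simp
          qed
          have c2: "(x0 + X p) mod 7 = xu"
          proof -
            have E: "x0 + X p - xu = x0 - (xu - X p)" by simp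
            have "7 dvd x0 + X p - xu" unfolding E using h1x by simp
            hence "(x0 + X p) mod 7 = xu mod 7" unfolding mod_dvd .
            thus ?thesis using ranges by simp
          qed
          have c3: "(y0 + b * Y q) mod m = yw"
          proof -
            have E: "y0 + b * Y q - yw = (y0 - (yu - b * Y p)) + (b * (Y q - Y p) - (yw - yu))" by (simp add: algebra_simps)
            have "m dvd y0 + b * Y q - yw" using h1y b(3) unfolding E by (rule dvd_add)
            hence "(y0 + b * Y q) mod m = yw mod m" unfolding mod_dvd .
            thus ?thesis using ranges by simp
          qed
          have c4: "(x0 + X q) mod 7 = xw"
          proof -
            have h2: "7 dvd (X q - X p) - (xw - xu)" using pq(2) unfolding \<alpha>_def mod_dvd .
            have E: "x0 + X q - xw = (x0 - (xu - X p)) + ((X q - X p) - (xw - xu))" by (simp add: algebra_simps)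
            have "7 dvd x0 + X q - xw" using h1x h2 unfolding E by (rule dvd_add)
            hence "(x0 + X q) mod 7 = xw mod 7" unfolding mod_dvd .
            thus ?thesis using ranges by simp
          qed
          have "blk b x0 y0 p = u" "blk b x0 y0 q = w" unfolding blk_def
            using c1 c2 c3 c4 encu by simp_all
          thus ?thesis unfolding memD e using pq(1) by auto
        qed
        moreover have "H = ?H" if hh: "H \<in> L \<union> B" "e \<in> snd H" for H
        proof -
          have "H \<notin> L"
          proof
            assume "H \<in> L"
            from inL[OF this] hh(2) have "int u div 7 = int w div 7" unfolding e(1) by blast
            thus False using False unfolding yu_def yw_def by simp
          qed
          hence hB: "H \<in> B" using hh(1) by blast
          obtain b' x0' y0' p' q' where r: "1 \<le> b'" "b' < m" "0 \<le> x0'" "x0' < 7" "0 \<le> y0'" "y0' < m"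
            "H = D_inst i (blk b' x0' y0')" "(p',q') \<in> D_arcs i" "yu = (y0' + b' * Y p') mod m" "xu = (x0' + X p') mod 7"
            "yw = (y0' + b' * Y q') mod m" "xw = (x0' + X q') mod 7"
            using inB[OF hB] hh(2) unfolding e(1) xu_def yu_def xw_def yw_def by blast
          have h1: "7 dvd (x0' + X p') - xu" using r(10) ranges unfolding mod_dvd[symmetric] by simp
          have h2: "7 dvd (x0' + X q') - xw" using r(12) ranges unfolding mod_dvd[symmetric] by simp
          have "7 dvd (X q' - X p') - (xw - xu)"
          proof -
            have E: "(X q' - X p') - (xw - xu) = ((x0' + X q') - xw) - ((x0' + X p') - xu)" by simp
            show ?thesis using h2 h1 unfolding E by (rule dvd_diff)
          qed
          moreover have "7 dvd (X q - X p) - (xw - xu)" using pq(2) unfolding \<alpha>_def mod_dvd .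
          ultimately have "7 dvd ((X q' - X p') - (xw - xu)) - ((X q - X p) - (xw - xu))" by (rule dvd_diff)
          moreover have "((X q' - X p') - (xw - xu)) - ((X q - X p) - (xw - xu)) = (X q' - X p') - (X q - X p)" by simp
          ultimately have "7 dvd (X q' - X p') - (X q - X p)" by simp
          hence "(X q' - X p') mod 7 = (X q - X p) mod 7" unfolding mod_dvd .
          hence pp: "p' = p" "q' = q" using dinj[OF r(8) pq(1)] by auto
          have "7 dvd x0' - x0"
          proof -
            have E: "x0' - x0 = ((x0' + X p) - xu) - (x0 - (xu - X p))" by simp
            have h1': "7 dvd (x0' + X p) - xu" using h1 pp by simp
            show ?thesis using h1' h1x unfolding E by (rule dvd_diff)
          qed
          hence xx: "x0' = x0" using small_dvd[of x0' 7 x0] r x0r by auto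
          have g1: "m dvd (y0' + b' * Y p) - yu" using r(9) pp ranges unfolding mod_dvd[symmetric] by simp
          have g2: "m dvd (y0' + b' * Y q) - yw" using r(11) pp ranges unfolding mod_dvd[symmetric] by simp
          have "m dvd (b' - b) * (Y q - Y p)"
          proof -
            have E: "(b' - b) * (Y q - Y p) = (((y0' + b' * Y q) - yw) - ((y0' + b' * Y p) - yu)) - (b * (Y q - Y p) - (yw - yu))"
              by (simp add: algebra_simps)
            have "m dvd ((y0' + b' * Y q) - yw) - ((y0' + b' * Y p) - yu)" using g2 g1 by (rule dvd_diff)
            thus ?thesis using b(3) unfolding E by (rule dvd_diff)
          qed
          hence "m dvd b' - b" using cancel_d[OF modd d] by blast
          hence bb: "b' = b" using small_dvd[of b' m b] r b by auto
          have "m dvd y0' - y0"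
          proof -
            have E: "y0' - y0 = ((y0' + b * Y p) - yu) - (y0 - (yu - b * Y p))" by simp
            have g1': "m dvd (y0' + b * Y p) - yu" using g1 bb by simp
            show ?thesis using g1' h1y unfolding E by (rule dvd_diff)
          qed
          hence "y0' = y0" using small_dvd[of y0' m y0] r y0r by auto
          thus ?thesis using r(7) xx bb by simp
        qed
        ultimately show ?thesis by blast
      qed
  qed
  show ?thesis
  proof (intro exI[of _ "L \<union> B"])
    show "D_decomposition i (Kstar v) (L \<union> B)"
      unfolding D_decomposition_def using goodL goodB uniq by blast
  qed
qed

lemma generic2:
  fixes m :: int and X Y :: "nat \<Rightarrow> int" and G :: "nat \<Rightarrow> nat \<Rightarrow> int" and v i :: nat
  assumes "odd m" "m > 0" "int v = 7*m"
  and Asub: "\<forall>(p,q)\<in>D_arcs i. p < 7 \<and> q < 7 \<and> p \<noteq> q"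
  and Xr: "\<forall>k<7. 0 \<le> X k \<and> X k < 7"
  and sep: "\<forall>k<7. \<forall>l<7. k \<noteq> l \<longrightarrow> X k \<noteq> X l \<or> \<bar>Y k - Y l\<bar> \<in> {1,2}"
  and eta: "\<forall>(p,q)\<in>D_arcs i. \<bar>Y q - Y p\<bar> \<in> {1,2}"
  and dinj: "\<forall>(p,q)\<in>D_arcs i. \<forall>(p',q')\<in>D_arcs i. (X q - X p) mod 7 = (X q' - X p') mod 7 \<longrightarrow> p = p' \<and> q = q'"
  and dsurj: "\<forall>\<alpha>\<in>{0..6}. \<exists>(p,q)\<in>D_arcs i. (X q - X p) mod 7 = \<alpha>"
  and Gr: "\<forall>j<6. \<forall>k<7. 0 \<le> G j k \<and> G j k < 7"
  and Ginj: "\<forall>j<6. \<forall>k<7. \<forall>l<7. G j k = G j l \<longrightarrow> k = l"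
  and Gcov: "\<forall>a\<in>{0..6}. \<forall>c\<in>{0..6}. a \<noteq> c \<longrightarrow> (\<exists>j<6. \<exists>(p,q)\<in>D_arcs i. G j p = a \<and> G j q = c)"
  and Guniq: "\<forall>j<6. \<forall>j'<6. \<forall>(p,q)\<in>D_arcs i. \<forall>(p',q')\<in>D_arcs i. G j p = G j' p' \<and> G j q = G j' q' \<longrightarrow> j = j'"
  shows "\<exists>\<D>. D_decomposition i (Kstar v) \<D>"
proof (rule generic[OF assms(1-3)])
  show "p < 7 \<and> q < 7 \<and> p \<noteq> q" if "(p,q)\<in>D_arcs i" for p q using bspec[OF Asub that] by simp
  show "0 \<le> X k \<and> X k < 7" if "k<7" for k using Xr[rule_format, OF that] .
  show "X k \<noteq> X l \<or> \<bar>Y k - Y l\<bar> \<in> {1,2}" if "k<7" "l<7" "k \<noteq> l" for k l using sep[rule_format, OF that] .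
  show "\<bar>Y q - Y p\<bar> \<in> {1,2}" if "(p,q)\<in>D_arcs i" for p q using bspec[OF eta that] by simp
  show "p = p' \<and> q = q'" if h: "(p,q)\<in>D_arcs i" "(p',q')\<in>D_arcs i" "(X q - X p) mod 7 = (X q' - X p') mod 7" for p q p' q'
  proof -
    have "\<forall>(p',q')\<in>D_arcs i. (X q - X p) mod 7 = (X q' - X p') mod 7 \<longrightarrow> p = p' \<and> q = q'"
      using bspec[OF dinj h(1)] by simp
    from bspec[OF this h(2)] h(3) show ?thesis by simp
  qed
  show "\<exists>p q. (p,q)\<in>D_arcs i \<and> (X q - X p) mod 7 = \<alpha>" if "0 \<le> \<alpha>" "\<alpha> \<le> 6" for \<alpha>
  proof -
    have "\<alpha> \<in> {0..6}" using that by simp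
    from bspec[OF dsurj this] obtain x where "x \<in> D_arcs i" "case x of (p,q) \<Rightarrow> (X q - X p) mod 7 = \<alpha>" by blast
    thus ?thesis by (cases x) auto
  qed
  show "0 \<le> G j k \<and> G j k < 7" if "j<6" "k<7" for j k using Gr[rule_format, OF that] .
  show "k = l" if "j<6" "k<7" "l<7" "G j k = G j l" for j k l using Ginj[rule_format, OF that] .
  show "\<exists>j p q. j<6 \<and> (p,q)\<in>D_arcs i \<and> G j p = a \<and> G j q = c" if h: "0 \<le> a" "a \<le> 6" "0 \<le> c" "c \<le> 6" "a \<noteq> c" for a c
  proof -
    have "a \<in> {0..6}" "c \<in> {0..6}" using h by auto
    from Gcov[rule_format, OF this h(5)]
    obtain j x where "j < 6" "x \<in> D_arcs i" "case x of (p,q) \<Rightarrow> G j p = a \<and> G j q = c" by blast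
    thus ?thesis by (cases x) auto
  qed
  show "j = j'" if h: "j<6" "j'<6" "(p,q)\<in>D_arcs i" "(p',q')\<in>D_arcs i" "G j p = G j' p'" "G j q = G j' q'" for j j' p q p' q'
  proof -
    have "\<forall>(p,q)\<in>D_arcs i. \<forall>(p',q')\<in>D_arcs i. G j p = G j' p' \<and> G j q = G j' q' \<longrightarrow> j = j'" using Guniq h(1,2) by simp
    from bspec[OF this h(3)] have "\<forall>(p',q')\<in>D_arcs i. G j p = G j' p' \<and> G j q = G j' q' \<longrightarrow> j = j'" by simp
    from bspec[OF this h(4)] h(5,6) show "j = j'" by simp
  qed
qed

lemma I7: "{0..6::int} = {0,1,2,3,4,5,6}" by auto

definition "X1 = (\<lambda>k. ([0,0,1,0,2,5,2]::int list) ! k)"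
definition "Y1 = (\<lambda>k. ([0,1,0,2,0,1,2]::int list) ! k)"
definition "G1 = (\<lambda>j k. ([[1,0,2,3,4,5,6],[1,2,0,3,6,5,4],[1,3,0,4,6,2,5],[3,1,4,2,6,0,5],[2,1,5,0,6,4,3],[0,1,6,3,5,2,4]]::int list list) ! j ! k)"


lemma inst1: assumes "odd m" "m > 0" "int v = 7*m" shows "\<exists>\<D>. D_decomposition 1 (Kstar v) \<D>"
proof (rule generic2[OF assms, where X=X1 and Y=Y1 and G=G1])
  show "\<forall>(p,q)\<in>D_arcs 1. p < 7 \<and> q < 7 \<and> p \<noteq> q" by (simp add: D_arcs_def)
  show "\<forall>k<7. 0 \<le> X1 k \<and> X1 k < 7" by (simp add: X1_def numeral_eq_Suc All_less_Suc)
  show "\<forall>k<7. \<forall>l<7. k \<noteq> l \<longrightarrow> X1 k \<noteq> X1 l \<or> \<bar>Y1 k - Y1 l\<bar> \<in> {1,2}" by (simp add: X1_def Y1_def numeral_eq_Suc All_less_Suc)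
  show "\<forall>(p,q)\<in>D_arcs 1. \<bar>Y1 q - Y1 p\<bar> \<in> {1,2}" by (simp add: D_arcs_def Y1_def)
  show "\<forall>(p,q)\<in>D_arcs 1. \<forall>(p',q')\<in>D_arcs 1. (X1 q - X1 p) mod 7 = (X1 q' - X1 p') mod 7 \<longrightarrow> p = p' \<and> q = q'"
    by (simp add: D_arcs_def X1_def)
  show "\<forall>\<alpha>\<in>{0..6}. \<exists>(p,q)\<in>D_arcs 1. (X1 q - X1 p) mod 7 = \<alpha>" unfolding I7 by (simp add: D_arcs_def X1_def)
  show "\<forall>j<6. \<forall>k<7. 0 \<le> G1 j k \<and> G1 j k < 7" by (simp add: G1_def numeral_eq_Suc All_less_Suc)
  show "\<forall>j<6. \<forall>k<7. \<forall>l<7. G1 j k = G1 j l \<longrightarrow> k = l" by (simp add: G1_def numeral_eq_Suc All_less_Suc)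
  show "\<forall>a\<in>{0..6}. \<forall>c\<in>{0..6}. a \<noteq> c \<longrightarrow> (\<exists>j<6. \<exists>(p,q)\<in>D_arcs 1. G1 j p = a \<and> G1 j q = c)"
    unfolding I7 by (simp add: D_arcs_def G1_def numeral_eq_Suc Ex_less_Suc)
  show "\<forall>j<6. \<forall>j'<6. \<forall>(p,q)\<in>D_arcs 1. \<forall>(p',q')\<in>D_arcs 1. G1 j p = G1 j' p' \<and> G1 j q = G1 j' q' \<longrightarrow> j = j'"
    by (simp add: D_arcs_def G1_def numeral_eq_Suc All_less_Suc)
qed

definition "X2 = (\<lambda>k. ([0,1,0,0,2,5,2]::int list) ! k)"
definition "Y2 = (\<lambda>k. ([0,1,2,1,0,1,2]::int list) ! k)"
definition "G2 = (\<lambda>j k. ([[1,0,2,3,4,5,6],[1,2,0,3,6,5,4],[1,3,6,0,4,2,5],[2,6,1,4,0,5,3],[6,0,1,3,5,2,4],[0,5,1,2,6,4,3]]::int list list) ! j ! k)"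
lemma inst2: assumes "odd m" "m > 0" "int v = 7*m" shows "\<exists>\<D>. D_decomposition 2 (Kstar v) \<D>"
proof (rule generic2[OF assms, where X=X2 and Y=Y2 and G=G2])
  show "\<forall>(p,q)\<in>D_arcs 2. p < 7 \<and> q < 7 \<and> p \<noteq> q" by (simp add: D_arcs_def)
  show "\<forall>k<7. 0 \<le> X2 k \<and> X2 k < 7" by (simp add: X2_def numeral_eq_Suc All_less_Suc)
  show "\<forall>k<7. \<forall>l<7. k \<noteq> l \<longrightarrow> X2 k \<noteq> X2 l \<or> \<bar>Y2 k - Y2 l\<bar> \<in> {1,2}" by (simp add: X2_def Y2_def numeral_eq_Suc All_less_Suc)
  show "\<forall>(p,q)\<in>D_arcs 2. \<bar>Y2 q - Y2 p\<bar> \<in> {1,2}" by (simp add: D_arcs_def Y2_def)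
  show "\<forall>(p,q)\<in>D_arcs 2. \<forall>(p',q')\<in>D_arcs 2. (X2 q - X2 p) mod 7 = (X2 q' - X2 p') mod 7 \<longrightarrow> p = p' \<and> q = q'"
    by (simp add: D_arcs_def X2_def)
  show "\<forall>\<alpha>\<in>{0..6}. \<exists>(p,q)\<in>D_arcs 2. (X2 q - X2 p) mod 7 = \<alpha>" unfolding I7 by (simp add: D_arcs_def X2_def)
  show "\<forall>j<6. \<forall>k<7. 0 \<le> G2 j k \<and> G2 j k < 7" by (simp add: G2_def numeral_eq_Suc All_less_Suc)
  show "\<forall>j<6. \<forall>k<7. \<forall>l<7. G2 j k = G2 j l \<longrightarrow> k = l" by (simp add: G2_def numeral_eq_Suc All_less_Suc)
  show "\<forall>a\<in>{0..6}. \<forall>c\<in>{0..6}. a \<noteq> c \<longrightarrow> (\<exists>j<6. \<exists>(p,q)\<in>D_arcs 2. G2 j p = a \<and> G2 j q = c)"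
    unfolding I7 by (simp add: D_arcs_def G2_def numeral_eq_Suc Ex_less_Suc)
  show "\<forall>j<6. \<forall>j'<6. \<forall>(p,q)\<in>D_arcs 2. \<forall>(p',q')\<in>D_arcs 2. G2 j p = G2 j' p' \<and> G2 j q = G2 j' q' \<longrightarrow> j = j'"
    by (simp add: D_arcs_def G2_def numeral_eq_Suc All_less_Suc)
qed

definition "X3 = (\<lambda>k. ([0,1,1,0,2,0,3]::int list) ! k)"
definition "Y3 = (\<lambda>k. ([0,1,0,1,0,2,1]::int list) ! k)"
definition "G3 = (\<lambda>j k. ([[1,0,2,3,4,5,6],[1,2,3,0,4,6,5],[1,3,5,0,6,2,4],[0,1,2,5,3,6,4],[0,6,3,1,4,2,5],[0,2,6,1,5,4,3]]::int list list) ! j ! k)"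
lemma inst3: assumes "odd m" "m > 0" "int v = 7*m" shows "\<exists>\<D>. D_decomposition 3 (Kstar v) \<D>"
proof (rule generic2[OF assms, where X=X3 and Y=Y3 and G=G3])
  show "\<forall>(p,q)\<in>D_arcs 3. p < 7 \<and> q < 7 \<and> p \<noteq> q" by (simp add: D_arcs_def)
  show "\<forall>k<7. 0 \<le> X3 k \<and> X3 k < 7" by (simp add: X3_def numeral_eq_Suc All_less_Suc)
  show "\<forall>k<7. \<forall>l<7. k \<noteq> l \<longrightarrow> X3 k \<noteq> X3 l \<or> \<bar>Y3 k - Y3 l\<bar> \<in> {1,2}" by (simp add: X3_def Y3_def numeral_eq_Suc All_less_Suc)
  show "\<forall>(p,q)\<in>D_arcs 3. \<bar>Y3 q - Y3 p\<bar> \<in> {1,2}" by (simp add: D_arcs_def Y3_def)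
  show "\<forall>(p,q)\<in>D_arcs 3. \<forall>(p',q')\<in>D_arcs 3. (X3 q - X3 p) mod 7 = (X3 q' - X3 p') mod 7 \<longrightarrow> p = p' \<and> q = q'"
    by (simp add: D_arcs_def X3_def)
  show "\<forall>\<alpha>\<in>{0..6}. \<exists>(p,q)\<in>D_arcs 3. (X3 q - X3 p) mod 7 = \<alpha>" unfolding I7 by (simp add: D_arcs_def X3_def)
  show "\<forall>j<6. \<forall>k<7. 0 \<le> G3 j k \<and> G3 j k < 7" by (simp add: G3_def numeral_eq_Suc All_less_Suc)
  show "\<forall>j<6. \<forall>k<7. \<forall>l<7. G3 j k = G3 j l \<longrightarrow> k = l" by (simp add: G3_def numeral_eq_Suc All_less_Suc)
  show "\<forall>a\<in>{0..6}. \<forall>c\<in>{0..6}. a \<noteq> c \<longrightarrow> (\<exists>j<6. \<exists>(p,q)\<in>D_arcs 3. G3 j p = a \<and> G3 j q = c)"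
    unfolding I7 by (simp add: D_arcs_def G3_def numeral_eq_Suc Ex_less_Suc)
  show "\<forall>j<6. \<forall>j'<6. \<forall>(p,q)\<in>D_arcs 3. \<forall>(p',q')\<in>D_arcs 3. G3 j p = G3 j' p' \<and> G3 j q = G3 j' q' \<longrightarrow> j = j'"
    by (simp add: D_arcs_def G3_def numeral_eq_Suc All_less_Suc)
qed

definition "X4 = (\<lambda>k. ([0,1,1,3,2,0,3]::int list) ! k)"
definition "Y4 = (\<lambda>k. ([0,1,0,1,0,1,2]::int list) ! k)"
definition "G4 = (\<lambda>j k. ([[1,0,2,3,4,5,6],[1,2,0,3,6,5,4],[1,3,0,4,6,2,5],[2,1,3,6,4,0,5],[6,1,4,2,3,5,0],[4,2,6,0,1,5,3]]::int list list) ! j ! k)"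
lemma inst4: assumes "odd m" "m > 0" "int v = 7*m" shows "\<exists>\<D>. D_decomposition 4 (Kstar v) \<D>"
proof (rule generic2[OF assms, where X=X4 and Y=Y4 and G=G4])
  show "\<forall>(p,q)\<in>D_arcs 4. p < 7 \<and> q < 7 \<and> p \<noteq> q" by (simp add: D_arcs_def)
  show "\<forall>k<7. 0 \<le> X4 k \<and> X4 k < 7" by (simp add: X4_def numeral_eq_Suc All_less_Suc)
  show "\<forall>k<7. \<forall>l<7. k \<noteq> l \<longrightarrow> X4 k \<noteq> X4 l \<or> \<bar>Y4 k - Y4 l\<bar> \<in> {1,2}" by (simp add: X4_def Y4_def numeral_eq_Suc All_less_Suc)
  show "\<forall>(p,q)\<in>D_arcs 4. \<bar>Y4 q - Y4 p\<bar> \<in> {1,2}" by (simp add: D_arcs_def Y4_def)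
  show "\<forall>(p,q)\<in>D_arcs 4. \<forall>(p',q')\<in>D_arcs 4. (X4 q - X4 p) mod 7 = (X4 q' - X4 p') mod 7 \<longrightarrow> p = p' \<and> q = q'"
    by (simp add: D_arcs_def X4_def)
  show "\<forall>\<alpha>\<in>{0..6}. \<exists>(p,q)\<in>D_arcs 4. (X4 q - X4 p) mod 7 = \<alpha>" unfolding I7 by (simp add: D_arcs_def X4_def)
  show "\<forall>j<6. \<forall>k<7. 0 \<le> G4 j k \<and> G4 j k < 7" by (simp add: G4_def numeral_eq_Suc All_less_Suc)
  show "\<forall>j<6. \<forall>k<7. \<forall>l<7. G4 j k = G4 j l \<longrightarrow> k = l" by (simp add: G4_def numeral_eq_Suc All_less_Suc)
  show "\<forall>a\<in>{0..6}. \<forall>c\<in>{0..6}. a \<noteq> c \<longrightarrow> (\<exists>j<6. \<exists>(p,q)\<in>D_arcs 4. G4 j p = a \<and> G4 j q = c)"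
    unfolding I7 by (simp add: D_arcs_def G4_def numeral_eq_Suc Ex_less_Suc)
  show "\<forall>j<6. \<forall>j'<6. \<forall>(p,q)\<in>D_arcs 4. \<forall>(p',q')\<in>D_arcs 4. G4 j p = G4 j' p' \<and> G4 j q = G4 j' q' \<longrightarrow> j = j'"
    by (simp add: D_arcs_def G4_def numeral_eq_Suc All_less_Suc)
qed

definition "X5 = (\<lambda>k. ([0,0,1,0,2,5,2]::int list) ! k)"
definition "Y5 = (\<lambda>k. ([0,1,0,2,0,1,2]::int list) ! k)"
definition "G5 = (\<lambda>j k. ([[1,0,2,3,4,5,6],[1,2,0,3,6,5,4],[1,3,0,4,6,2,5],[3,6,2,1,5,0,4],[3,2,4,1,6,0,5],[4,6,0,1,3,5,2]]::int list list) ! j ! k)"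
lemma inst5: assumes "odd m" "m > 0" "int v = 7*m" shows "\<exists>\<D>. D_decomposition 5 (Kstar v) \<D>"
proof (rule generic2[OF assms, where X=X5 and Y=Y5 and G=G5])
  show "\<forall>(p,q)\<in>D_arcs 5. p < 7 \<and> q < 7 \<and> p \<noteq> q" by (simp add: D_arcs_def)
  show "\<forall>k<7. 0 \<le> X5 k \<and> X5 k < 7" by (simp add: X5_def numeral_eq_Suc All_less_Suc)
  show "\<forall>k<7. \<forall>l<7. k \<noteq> l \<longrightarrow> X5 k \<noteq> X5 l \<or> \<bar>Y5 k - Y5 l\<bar> \<in> {1,2}" by (simp add: X5_def Y5_def numeral_eq_Suc All_less_Suc)
  show "\<forall>(p,q)\<in>D_arcs 5. \<bar>Y5 q - Y5 p\<bar> \<in> {1,2}" by (simp add: D_arcs_def Y5_def)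
  show "\<forall>(p,q)\<in>D_arcs 5. \<forall>(p',q')\<in>D_arcs 5. (X5 q - X5 p) mod 7 = (X5 q' - X5 p') mod 7 \<longrightarrow> p = p' \<and> q = q'"
    by (simp add: D_arcs_def X5_def)
  show "\<forall>\<alpha>\<in>{0..6}. \<exists>(p,q)\<in>D_arcs 5. (X5 q - X5 p) mod 7 = \<alpha>" unfolding I7 by (simp add: D_arcs_def X5_def)
  show "\<forall>j<6. \<forall>k<7. 0 \<le> G5 j k \<and> G5 j k < 7" by (simp add: G5_def numeral_eq_Suc All_less_Suc)
  show "\<forall>j<6. \<forall>k<7. \<forall>l<7. G5 j k = G5 j l \<longrightarrow> k = l" by (simp add: G5_def numeral_eq_Suc All_less_Suc)
  show "\<forall>a\<in>{0..6}. \<forall>c\<in>{0..6}. a \<noteq> c \<longrightarrow> (\<exists>j<6. \<exists>(p,q)\<in>D_arcs 5. G5 j p = a \<and> G5 j q = c)"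
    unfolding I7 by (simp add: D_arcs_def G5_def numeral_eq_Suc Ex_less_Suc)
  show "\<forall>j<6. \<forall>j'<6. \<forall>(p,q)\<in>D_arcs 5. \<forall>(p',q')\<in>D_arcs 5. G5 j p = G5 j' p' \<and> G5 j q = G5 j' q' \<longrightarrow> j = j'"
    by (simp add: D_arcs_def G5_def numeral_eq_Suc All_less_Suc)
qed

definition "X6 = (\<lambda>k. ([0,0,1,3,0,6,2]::int list) ! k)"
definition "Y6 = (\<lambda>k. ([0,1,0,1,2,0,1]::int list) ! k)"
definition "G6 = (\<lambda>j k. ([[1,0,2,3,4,5,6],[1,2,0,3,5,6,4],[1,3,6,0,4,2,5],[2,3,4,0,5,1,6],[6,0,1,4,2,5,3],[0,3,1,2,6,4,5]]::int list list) ! j ! k)"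
lemma inst6: assumes "odd m" "m > 0" "int v = 7*m" shows "\<exists>\<D>. D_decomposition 6 (Kstar v) \<D>"
proof (rule generic2[OF assms, where X=X6 and Y=Y6 and G=G6])
  show "\<forall>(p,q)\<in>D_arcs 6. p < 7 \<and> q < 7 \<and> p \<noteq> q" by (simp add: D_arcs_def)
  show "\<forall>k<7. 0 \<le> X6 k \<and> X6 k < 7" by (simp add: X6_def numeral_eq_Suc All_less_Suc)
  show "\<forall>k<7. \<forall>l<7. k \<noteq> l \<longrightarrow> X6 k \<noteq> X6 l \<or> \<bar>Y6 k - Y6 l\<bar> \<in> {1,2}" by (simp add: X6_def Y6_def numeral_eq_Suc All_less_Suc)
  show "\<forall>(p,q)\<in>D_arcs 6. \<bar>Y6 q - Y6 p\<bar> \<in> {1,2}" by (simp add: D_arcs_def Y6_def)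
  show "\<forall>(p,q)\<in>D_arcs 6. \<forall>(p',q')\<in>D_arcs 6. (X6 q - X6 p) mod 7 = (X6 q' - X6 p') mod 7 \<longrightarrow> p = p' \<and> q = q'"
    by (simp add: D_arcs_def X6_def)
  show "\<forall>\<alpha>\<in>{0..6}. \<exists>(p,q)\<in>D_arcs 6. (X6 q - X6 p) mod 7 = \<alpha>" unfolding I7 by (simp add: D_arcs_def X6_def)
  show "\<forall>j<6. \<forall>k<7. 0 \<le> G6 j k \<and> G6 j k < 7" by (simp add: G6_def numeral_eq_Suc All_less_Suc)
  show "\<forall>j<6. \<forall>k<7. \<forall>l<7. G6 j k = G6 j l \<longrightarrow> k = l" by (simp add: G6_def numeral_eq_Suc All_less_Suc)
  show "\<forall>a\<in>{0..6}. \<forall>c\<in>{0..6}. a \<noteq> c \<longrightarrow> (\<exists>j<6. \<exists>(p,q)\<in>D_arcs 6. G6 j p = a \<and> G6 j q = c)"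
    unfolding I7 by (simp add: D_arcs_def G6_def numeral_eq_Suc Ex_less_Suc)
  show "\<forall>j<6. \<forall>j'<6. \<forall>(p,q)\<in>D_arcs 6. \<forall>(p',q')\<in>D_arcs 6. G6 j p = G6 j' p' \<and> G6 j q = G6 j' q' \<longrightarrow> j = j'"
    by (simp add: D_arcs_def G6_def numeral_eq_Suc All_less_Suc)
qed

definition "X7 = (\<lambda>k. ([0,0,1,3,0,3,1]::int list) ! k)"
definition "Y7 = (\<lambda>k. ([0,1,0,1,2,0,1]::int list) ! k)"
definition "G7 = (\<lambda>j k. ([[1,0,2,3,4,5,6],[1,2,3,0,4,6,5],[1,3,5,0,6,2,4],[0,1,2,5,4,3,6],[0,5,3,1,6,4,2],[6,2,5,1,4,0,3]]::int list list) ! j ! k)"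
lemma inst7: assumes "odd m" "m > 0" "int v = 7*m" shows "\<exists>\<D>. D_decomposition 7 (Kstar v) \<D>"
proof (rule generic2[OF assms, where X=X7 and Y=Y7 and G=G7])
  show "\<forall>(p,q)\<in>D_arcs 7. p < 7 \<and> q < 7 \<and> p \<noteq> q" by (simp add: D_arcs_def)
  show "\<forall>k<7. 0 \<le> X7 k \<and> X7 k < 7" by (simp add: X7_def numeral_eq_Suc All_less_Suc)
  show "\<forall>k<7. \<forall>l<7. k \<noteq> l \<longrightarrow> X7 k \<noteq> X7 l \<or> \<bar>Y7 k - Y7 l\<bar> \<in> {1,2}" by (simp add: X7_def Y7_def numeral_eq_Suc All_less_Suc)
  show "\<forall>(p,q)\<in>D_arcs 7. \<bar>Y7 q - Y7 p\<bar> \<in> {1,2}" by (simp add: D_arcs_def Y7_def)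
  show "\<forall>(p,q)\<in>D_arcs 7. \<forall>(p',q')\<in>D_arcs 7. (X7 q - X7 p) mod 7 = (X7 q' - X7 p') mod 7 \<longrightarrow> p = p' \<and> q = q'"
    by (simp add: D_arcs_def X7_def)
  show "\<forall>\<alpha>\<in>{0..6}. \<exists>(p,q)\<in>D_arcs 7. (X7 q - X7 p) mod 7 = \<alpha>" unfolding I7 by (simp add: D_arcs_def X7_def)
  show "\<forall>j<6. \<forall>k<7. 0 \<le> G7 j k \<and> G7 j k < 7" by (simp add: G7_def numeral_eq_Suc All_less_Suc)
  show "\<forall>j<6. \<forall>k<7. \<forall>l<7. G7 j k = G7 j l \<longrightarrow> k = l" by (simp add: G7_def numeral_eq_Suc All_less_Suc)
  show "\<forall>a\<in>{0..6}. \<forall>c\<in>{0..6}. a \<noteq> c \<longrightarrow> (\<exists>j<6. \<exists>(p,q)\<in>D_arcs 7. G7 j p = a \<and> G7 j q = c)"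
    unfolding I7 by (simp add: D_arcs_def G7_def numeral_eq_Suc Ex_less_Suc)
  show "\<forall>j<6. \<forall>j'<6. \<forall>(p,q)\<in>D_arcs 7. \<forall>(p',q')\<in>D_arcs 7. G7 j p = G7 j' p' \<and> G7 j q = G7 j' q' \<longrightarrow> j = j'"
    by (simp add: D_arcs_def G7_def numeral_eq_Suc All_less_Suc)
qed

definition "X8 = (\<lambda>k. ([0,0,1,3,2,0,3]::int list) ! k)"
definition "Y8 = (\<lambda>k. ([0,1,0,2,0,2,1]::int list) ! k)"
definition "G8 = (\<lambda>j k. ([[1,0,2,3,4,5,6],[1,2,0,3,6,5,4],[2,4,0,5,1,3,6],[4,1,5,2,3,0,6],[6,2,1,0,5,3,4],[0,4,2,5,3,1,6]]::int list list) ! j ! k)"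
lemma inst8: assumes "odd m" "m > 0" "int v = 7*m" shows "\<exists>\<D>. D_decomposition 8 (Kstar v) \<D>"
proof (rule generic2[OF assms, where X=X8 and Y=Y8 and G=G8])
  show "\<forall>(p,q)\<in>D_arcs 8. p < 7 \<and> q < 7 \<and> p \<noteq> q" by (simp add: D_arcs_def)
  show "\<forall>k<7. 0 \<le> X8 k \<and> X8 k < 7" by (simp add: X8_def numeral_eq_Suc All_less_Suc)
  show "\<forall>k<7. \<forall>l<7. k \<noteq> l \<longrightarrow> X8 k \<noteq> X8 l \<or> \<bar>Y8 k - Y8 l\<bar> \<in> {1,2}" by (simp add: X8_def Y8_def numeral_eq_Suc All_less_Suc)
  show "\<forall>(p,q)\<in>D_arcs 8. \<bar>Y8 q - Y8 p\<bar> \<in> {1,2}" by (simp add: D_arcs_def Y8_def)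
  show "\<forall>(p,q)\<in>D_arcs 8. \<forall>(p',q')\<in>D_arcs 8. (X8 q - X8 p) mod 7 = (X8 q' - X8 p') mod 7 \<longrightarrow> p = p' \<and> q = q'"
    by (simp add: D_arcs_def X8_def)
  show "\<forall>\<alpha>\<in>{0..6}. \<exists>(p,q)\<in>D_arcs 8. (X8 q - X8 p) mod 7 = \<alpha>" unfolding I7 by (simp add: D_arcs_def X8_def)
  show "\<forall>j<6. \<forall>k<7. 0 \<le> G8 j k \<and> G8 j k < 7" by (simp add: G8_def numeral_eq_Suc All_less_Suc)
  show "\<forall>j<6. \<forall>k<7. \<forall>l<7. G8 j k = G8 j l \<longrightarrow> k = l" by (simp add: G8_def numeral_eq_Suc All_less_Suc)
  show "\<forall>a\<in>{0..6}. \<forall>c\<in>{0..6}. a \<noteq> c \<longrightarrow> (\<exists>j<6. \<exists>(p,q)\<in>D_arcs 8. G8 j p = a \<and> G8 j q = c)"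
    unfolding I7 by (simp add: D_arcs_def G8_def numeral_eq_Suc Ex_less_Suc)
  show "\<forall>j<6. \<forall>j'<6. \<forall>(p,q)\<in>D_arcs 8. \<forall>(p',q')\<in>D_arcs 8. G8 j p = G8 j' p' \<and> G8 j q = G8 j' q' \<longrightarrow> j = j'"
    by (simp add: D_arcs_def G8_def numeral_eq_Suc All_less_Suc)
qed


theorem lemma3p5:
  fixes i v :: nat
  assumes "i \<in> {1..8}" and "v > 0" and "v mod 14 = 7"
  shows "\<exists>\<D>. D_decomposition i (Kstar v) \<D>"
proof -
  define m where "m = int (v div 7)"
  have v14: "v = 14 * (v div 14) + 7" using div_mult_mod_eq[of v 14] assms(3) by linarith
  hence d7: "v div 7 = 2 * (v div 14) + 1" by linarith
  hence h1: "odd m" unfolding m_def by simp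
  have h2: "m > 0" unfolding m_def using d7 by simp
  have "v = 7 * (v div 7)" using d7 v14 by linarith
  hence "int v = int (7 * (v div 7))" by simp
  hence h3: "int v = 7 * m" unfolding m_def by simp
  have "i = 1 \<or> i = 2 \<or> i = 3 \<or> i = 4 \<or> i = 5 \<or> i = 6 \<or> i = 7 \<or> i = 8" using assms(1) by auto
  thus ?thesis using inst1[OF h1 h2 h3] inst2[OF h1 h2 h3] inst3[OF h1 h2 h3] inst4[OF h1 h2 h3]
    inst5[OF h1 h2 h3] inst6[OF h1 h2 h3] inst7[OF h1 h2 h3] inst8[OF h1 h2 h3] by blast
qed

end
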